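(* Let $Q\subseteq 2^{\mathbb{N}^k}$ be a clopen quantifier. Then for every $n$ and every $a\in\mathbb{N}^n$ the orbit $\{g(a):g\in\mathrm{Aut}(Q)\}$ is definable in $\mathscr{L}_{\omega\omega}(Q)$.
   Context: A quantifier of type $\langle k\rangle$ on $\mathbb{N}$ is a family $Q$ of subsets of $\mathbb{N}^k$, identified with a subset of $2^{\mathbb{N}^k}$ (product topology). A permutation $f$ of $\mathbb{N}$ fixes $Q$ if $A\in Q\iff f(A)\in Q$ for all $A\subseteq\mathbb{N}^k$, where $f$ acts coordinatewise on tuples and $f(A)=\{f(a):a\in A\}$; $\mathrm{Aut}(Q)$ is the group of such permutations. $\mathscr{L}_{\omega\omega}(Q)$ is first-order logic extended by formulas $Qx\,\varphi(x,y)$ ($x$ a $k$-tuple of variables) with $\mathbb{N}\models Qx\,\varphi(x,b)$ iff $\{a\in\mathbb{N}^k:\mathbb{N}\models\varphi(a,b)\}\in Q$. A set $B\subseteq\mathbb{N}^n$ is definable in $\mathscr{L}_{\omega\omega}(Q)$ if there is a formula $\varphi(x_1,\dots,x_n)$ whose only non-logical symbol is $Q$ such that $b\in B\iff\mathbb{N}\models\varphi(b)$. *)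

theory Defs
  imports Main
begin

text \<open>Tuples in N^m are represented as lists of length m.\<close>
definition tuples :: "nat \<Rightarrow> nat list set" where
  "tuples m = {xs. length xs = m}"

definition is_quantifier :: "nat \<Rightarrow> nat list set set \<Rightarrow> bool" where
  "is_quantifier k Q \<longleftrightarrow> Q \<subseteq> Pow (tuples k)"

text \<open>Open sets in the product topology of 2^(N^k) (2 discrete), written out:
  basic open neighbourhoods are given by fixing membership on a finite set of tuples.\<close>
definition open_in_cantor :: "nat \<Rightarrow> nat list set set \<Rightarrow> bool" where
  "open_in_cantor k U \<longleftrightarrow>
     (\<forall>A\<in>U. \<exists>F. finite F \<and> F \<subseteq> tuples k \<and>
        (\<forall>B. B \<subseteq> tuples k \<longrightarrow> B \<inter> F = A \<inter> F \<longrightarrow> B \<in> U))"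

definition clopen_quantifier :: "nat \<Rightarrow> nat list set set \<Rightarrow> bool" where
  "clopen_quantifier k Q \<longleftrightarrow>
     open_in_cantor k Q \<and> open_in_cantor k (Pow (tuples k) - Q)"

definition Aut :: "nat \<Rightarrow> nat list set set \<Rightarrow> (nat \<Rightarrow> nat) set" where
  "Aut k Q = {f. bij f \<and> (\<forall>A. A \<subseteq> tuples k \<longrightarrow> (A \<in> Q \<longleftrightarrow> map f ` A \<in> Q))}"

definition orbit :: "nat \<Rightarrow> nat list set set \<Rightarrow> nat list \<Rightarrow> nat list set" where
  "orbit k Q a = {map g a | g. g \<in> Aut k Q}"

text \<open>Formulas of L_{omega omega}(Q) in the empty signature (only equality and Q).
  Variables are natural numbers.  QF xs phi binds the tuple of variables xs.\<close>
datatype form =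
    Eq nat nat
  | Neg form
  | Conj form form
  | Ex nat form
  | QF "nat list" form

fun fv :: "form \<Rightarrow> nat set" where
  "fv (Eq x y) = {x, y}"
| "fv (Neg p) = fv p"
| "fv (Conj p q) = fv p \<union> fv q"
| "fv (Ex x p) = fv p - {x}"
| "fv (QF xs p) = fv p - set xs"

definition upd_list :: "(nat \<Rightarrow> nat) \<Rightarrow> nat list \<Rightarrow> nat list \<Rightarrow> nat \<Rightarrow> nat" where
  "upd_list \<sigma> xs as = (\<lambda>v. if v \<in> set xs then as ! (LEAST i. i < length xs \<and> xs ! i = v) else \<sigma> v)"

text \<open>Satisfaction in N with quantifier Q of type k; a Q-formula must bind
  a k-tuple of distinct variables.\<close>
fun sat :: "nat \<Rightarrow> nat list set set \<Rightarrow> (nat \<Rightarrow> nat) \<Rightarrow> form \<Rightarrow> bool" where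
  "sat k Q \<sigma> (Eq x y) \<longleftrightarrow> \<sigma> x = \<sigma> y"
| "sat k Q \<sigma> (Neg p) \<longleftrightarrow> \<not> sat k Q \<sigma> p"
| "sat k Q \<sigma> (Conj p q) \<longleftrightarrow> sat k Q \<sigma> p \<and> sat k Q \<sigma> q"
| "sat k Q \<sigma> (Ex x p) \<longleftrightarrow> (\<exists>c. sat k Q (\<sigma>(x := c)) p)"
| "sat k Q \<sigma> (QF xs p) \<longleftrightarrow> length xs = k \<and> distinct xs \<and>
      {as \<in> tuples k. sat k Q (upd_list \<sigma> xs as) p} \<in> Q"

definition definable :: "nat \<Rightarrow> nat list set set \<Rightarrow> nat \<Rightarrow> nat list set \<Rightarrow> bool" where
  "definable k Q n B \<longleftrightarrow> B \<subseteq> tuples n \<and>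
     (\<exists>\<phi>. fv \<phi> \<subseteq> {..<n} \<and>
        (\<forall>b \<in> tuples n. b \<in> B \<longleftrightarrow> sat k Q (\<lambda>i. if i < n then b ! i else 0) \<phi>))"

end

theory Submission
  imports Defs "HOL-Analysis.Analysis"
begin


lemma openD: "open_in_cantor k U \<Longrightarrow> A \<in> U \<Longrightarrow> \<exists>F. finite F \<and> F \<subseteq> tuples k \<and> (\<forall>B. B \<subseteq> tuples k \<longrightarrow> B \<inter> F = A \<inter> F \<longrightarrow> B \<in> U)"
  unfolding open_in_cantor_def by (rule bspec)

lemma loc:
  assumes Qc: "clopen_quantifier k Q" and A: "A \<in> Pow (tuples k)"
  shows "\<exists>F. finite F \<and> F \<subseteq> tuples k \<and>
      (\<forall>B. B \<subseteq> tuples k \<longrightarrow> B \<inter> F = A \<inter> F \<longrightarrow> (B \<in> Q \<longleftrightarrow> A \<in> Q))"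
proof (cases "A \<in> Q")
  case True
  have "open_in_cantor k Q" using Qc unfolding clopen_quantifier_def by simp
  from openD[OF this True] obtain F where F: "finite F" "F \<subseteq> tuples k"
      "\<forall>B. B \<subseteq> tuples k \<longrightarrow> B \<inter> F = A \<inter> F \<longrightarrow> B \<in> Q" by blast
  have "\<forall>B. B \<subseteq> tuples k \<longrightarrow> B \<inter> F = A \<inter> F \<longrightarrow> (B \<in> Q \<longleftrightarrow> A \<in> Q)" using F(3) True by simp
  then show ?thesis using F(1,2) by blast
next
  case False
  then have A2: "A \<in> Pow (tuples k) - Q" using A by simp
  have "open_in_cantor k (Pow (tuples k) - Q)" using Qc unfolding clopen_quantifier_def by simp
  from openD[OF this A2] obtain F where F: "finite F" "F \<subseteq> tuples k"
      "\<forall>B. B \<subseteq> tuples k \<longrightarrow> B \<inter> F = A \<inter> F \<longrightarrow> B \<in> Pow (tuples k) - Q" by blast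
  have "\<forall>B. B \<subseteq> tuples k \<longrightarrow> B \<inter> F = A \<inter> F \<longrightarrow> (B \<in> Q \<longleftrightarrow> A \<in> Q)" using F(3) False by simp
  then show ?thesis using F(1,2) by blast
qed

lemma finite_support:
  assumes Qq: "is_quantifier k Q" and Qc: "clopen_quantifier k Q"
  shows "\<exists>F. finite F \<and> F \<subseteq> tuples k \<and>
    (\<forall>A B. A \<subseteq> tuples k \<longrightarrow> B \<subseteq> tuples k \<longrightarrow> A \<inter> F = B \<inter> F \<longrightarrow> (A \<in> Q \<longleftrightarrow> B \<in> Q))"
proof -
  define P where "P A F \<longleftrightarrow> finite F \<and> F \<subseteq> tuples k \<and>
      (\<forall>B. B \<subseteq> tuples k \<longrightarrow> B \<inter> F = A \<inter> F \<longrightarrow> (B \<in> Q \<longleftrightarrow> A \<in> Q))" for A F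
  define FA where "FA A = (SOME F. P A F)" for A
  have FA: "finite (FA A) \<and> FA A \<subseteq> tuples k \<and>
      (\<forall>B. B \<subseteq> tuples k \<longrightarrow> B \<inter> FA A = A \<inter> FA A \<longrightarrow> (B \<in> Q \<longleftrightarrow> A \<in> Q))" if "A \<in> Pow (tuples k)" for A
  proof -
    have "\<exists>F. P A F" using loc[OF Qc that] unfolding P_def .
    then have "P A (FA A)" unfolding FA_def by (rule someI_ex)
    then show ?thesis unfolding P_def .
  qed
  define T where "T = product_topology (\<lambda>_. discrete_topology (UNIV::bool set)) (tuples k)"
  define U where "U A = PiE (tuples k) (\<lambda>t. if t \<in> FA A then {t \<in> A} else UNIV)" for A
  have cs: "compact_space T" unfolding T_def
    by (simp add: compact_space_product_topology compact_space_discrete_topology)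
  have op: "openin T (U A)" if "A \<in> Pow (tuples k)" for A
  proof -
    let ?S = "\<lambda>t. if t \<in> FA A then {t \<in> A} else (UNIV::bool set)"
    have sub: "{i \<in> tuples k. ?S i \<noteq> topspace (discrete_topology (UNIV::bool set))} \<subseteq> FA A"
      by auto
    have ff: "finite (FA A)" using FA[OF that] by simp
    have fin: "finite {i \<in> tuples k. ?S i \<noteq> topspace (discrete_topology (UNIV::bool set))}"
      using finite_subset[OF sub ff] .
    have opi: "\<forall>i \<in> tuples k. openin (discrete_topology (UNIV::bool set)) (?S i)" by simp
    have "openin (product_topology (\<lambda>_. discrete_topology (UNIV::bool set)) (tuples k)) (PiE (tuples k) ?S)"
      unfolding openin_PiE_gen using fin opi by blast
    then show ?thesis unfolding T_def U_def .
  qed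
  have cov: "topspace T \<subseteq> \<Union> (U ` Pow (tuples k))"
  proof
    fix h assume h: "h \<in> topspace T"
    let ?A = "{t \<in> tuples k. h t}"
    have hE: "h \<in> extensional (tuples k)" using h unfolding T_def by (simp add: PiE_def)
    have hS: "\<forall>t\<in>tuples k. h t \<in> (if t \<in> FA ?A then {t \<in> ?A} else UNIV)" by simp
    have hU: "h \<in> U ?A" unfolding U_def PiE_def Pi_def using hE hS by blast
    have "?A \<in> Pow (tuples k)" by auto
    then have m: "U ?A \<in> U ` Pow (tuples k)" by (rule imageI)
    show "h \<in> \<Union> (U ` Pow (tuples k))" using UnionI[OF m hU] .
  qed
  have o2: "\<forall>V\<in>U ` Pow (tuples k). openin T V"
  proof
    fix V assume "V \<in> U ` Pow (tuples k)"
    then obtain A where "A \<in> Pow (tuples k)" "V = U A" by (rule imageE)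
    then show "openin T V" using op by simp
  qed
  have "\<exists>\<F>. finite \<F> \<and> \<F> \<subseteq> U ` Pow (tuples k) \<and> topspace T \<subseteq> \<Union> \<F>"
    using cs[unfolded compact_space_alt, THEN spec, of "U ` Pow (tuples k)", THEN mp, OF conjI[OF o2 cov]] .
  then obtain \<F> where F1: "finite \<F>" "\<F> \<subseteq> U ` Pow (tuples k)" "topspace T \<subseteq> \<Union> \<F>"
    by blast
  obtain As where As: "As \<subseteq> Pow (tuples k)" "finite As" "\<F> = U ` As"
    using finite_subset_image[OF F1(1) F1(2)] by blast
  define F where "F = \<Union> (FA ` As)"
  have fa: "finite (FA A0) \<and> FA A0 \<subseteq> tuples k \<and>
      (\<forall>B. B \<subseteq> tuples k \<longrightarrow> B \<inter> FA A0 = A0 \<inter> FA A0 \<longrightarrow> (B \<in> Q \<longleftrightarrow> A0 \<in> Q))" if "A0 \<in> As" for A0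
  proof -
    have "A0 \<in> Pow (tuples k)" using As(1) that by (rule subsetD)
    then show ?thesis by (rule FA)
  qed
  have "finite F" unfolding F_def using As(2) fa by simp
  moreover have "F \<subseteq> tuples k" unfolding F_def using fa by (simp add: UN_least)
  moreover have "A \<in> Q \<longleftrightarrow> B \<in> Q" if A: "A \<subseteq> tuples k" and B: "B \<subseteq> tuples k" and AB: "A \<inter> F = B \<inter> F" for A B
  proof -
    define hh where "hh = restrict (\<lambda>t. t \<in> A) (tuples k)"
    have "hh \<in> topspace T" unfolding T_def hh_def by simp
    then have "hh \<in> \<Union> (U ` As)" using F1(3) As(3) by (simp add: subset_iff)
    then obtain A0 where A0: "A0 \<in> As" "hh \<in> U A0" by (auto simp del: UN_iff) 
    note fa0 = fa[OF A0(1)]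
    have sub: "FA A0 \<subseteq> F" unfolding F_def using A0(1) by (rule UN_upper)
    have e1: "A \<inter> FA A0 = A0 \<inter> FA A0"
    proof -
      have "(t \<in> A) = (t \<in> A0)" if t: "t \<in> FA A0" for t
      proof -
        have tk: "t \<in> tuples k" using t fa0 by blast
        have "hh t \<in> (if t \<in> FA A0 then {t \<in> A0} else UNIV)"
          using A0(2) tk unfolding U_def PiE_def Pi_def by blast
        then show ?thesis using t tk unfolding hh_def by simp
      qed
      then show ?thesis by blast
    qed
    have e2: "B \<inter> FA A0 = A0 \<inter> FA A0" using e1 AB sub by blast
    have "A \<in> Q \<longleftrightarrow> A0 \<in> Q" using fa0 e1 A by blast
    moreover have "B \<in> Q \<longleftrightarrow> A0 \<in> Q" using fa0 e2 B by blast
    ultimately show ?thesis by simp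
  qed
  ultimately show ?thesis by blast
qed




definition detQ :: "nat \<Rightarrow> nat list set set \<Rightarrow> nat list set \<Rightarrow> bool" where
  "detQ k Q G \<longleftrightarrow> (\<forall>A B. A \<subseteq> tuples k \<longrightarrow> B \<subseteq> tuples k \<longrightarrow> A \<inter> G = B \<inter> G \<longrightarrow> (A \<in> Q \<longleftrightarrow> B \<in> Q))"

definition ess :: "nat \<Rightarrow> nat list set set \<Rightarrow> nat list \<Rightarrow> bool" where
  "ess k Q t \<longleftrightarrow> t \<in> tuples k \<and> (\<exists>A \<subseteq> tuples k. (insert t A \<in> Q) \<noteq> (A - {t} \<in> Q))"

lemma detQD: "detQ k Q G \<Longrightarrow> A \<subseteq> tuples k \<Longrightarrow> B \<subseteq> tuples k \<Longrightarrow> A \<inter> G = B \<inter> G \<Longrightarrow> (A \<in> Q \<longleftrightarrow> B \<in> Q)"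
  unfolding detQ_def by blast

lemma ess_in_det: assumes "detQ k Q G" "ess k Q t" shows "t \<in> G"
proof (rule ccontr)
  assume "t \<notin> G"
  obtain A where A: "A \<subseteq> tuples k" "(insert t A \<in> Q) \<noteq> (A - {t} \<in> Q)" using assms(2) unfolding ess_def by blast
  have 1: "insert t A \<inter> G = (A - {t}) \<inter> G" using \<open>t \<notin> G\<close> by blast
  have 2: "insert t A \<subseteq> tuples k" using A assms(2) unfolding ess_def by blast
  have 3: "A - {t} \<subseteq> tuples k" using A by blast
  show False using detQD[OF assms(1) 2 3 1] A(2) by simp
qed

lemma det_remove1: assumes "detQ k Q G" "\<not> ess k Q t" shows "detQ k Q (G - {t})"
  unfolding detQ_def
proof (intro allI impI)
  fix A B assume A: "A \<subseteq> tuples k" and B: "B \<subseteq> tuples k" and AB: "A \<inter> (G - {t}) = B \<inter> (G - {t})"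
  define A' where "A' = (if t \<in> B then insert t A else A - {t})"
  have A'A: "A' \<in> Q \<longleftrightarrow> A \<in> Q"
  proof (cases "t \<in> tuples k")
    case True
    then have ne: "insert t A \<in> Q \<longleftrightarrow> A - {t} \<in> Q" using assms(2) A unfolding ess_def by blast
    show ?thesis
    proof (cases "t \<in> A")
      case True then have "insert t A = A" by blast
      then show ?thesis using ne unfolding A'_def by auto
    next
      case False then have "A - {t} = A" by blast
      then show ?thesis using ne unfolding A'_def by auto
    qed
  next
    case False
    then have "t \<notin> A" "t \<notin> B" using A B by blast+
    then show ?thesis unfolding A'_def by auto
  qed
  have 1: "A' \<subseteq> tuples k" using A B unfolding A'_def by auto
  have 2: "A' \<inter> G = B \<inter> G" using AB unfolding A'_def by auto
  have "A' \<in> Q \<longleftrightarrow> B \<in> Q" using detQD[OF assms(1) 1 B 2] .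
  then show "A \<in> Q \<longleftrightarrow> B \<in> Q" using A'A by blast
qed

lemma det_remove: assumes "finite R" shows "detQ k Q G \<Longrightarrow> (\<forall>t\<in>R. \<not> ess k Q t) \<Longrightarrow> detQ k Q (G - R)"
  using assms
proof (induction R arbitrary: G rule: finite_induct)
  case empty then show ?case by simp
next
  case (insert x R)
  have "detQ k Q (G - R)" using insert by blast
  then have "detQ k Q (G - R - {x})" using det_remove1 insert by blast
  moreover have "G - R - {x} = G - insert x R" by blast
  ultimately show ?case by simp
qed

lemma ess_det:
  assumes "finite F" "detQ k Q F"
  shows "finite {t. ess k Q t} \<and> detQ k Q {t. ess k Q t}"
proof -
  have sub: "{t. ess k Q t} \<subseteq> F" using ess_in_det assms by blast
  have "detQ k Q (F - {t\<in>F. \<not> ess k Q t})" using det_remove assms by simp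
  moreover have "F - {t\<in>F. \<not> ess k Q t} = {t. ess k Q t}" using sub by blast
  ultimately show ?thesis using sub assms finite_subset by metis
qed

definition sw :: "nat \<Rightarrow> nat \<Rightarrow> nat \<Rightarrow> nat" where
  "sw a b x = (if x = a then b else if x = b then a else x)"

lemma bij_sw: "bij (sw a b)"
proof -
  have "sw a b \<circ> sw a b = id" unfolding sw_def by auto
  then show ?thesis using o_bij by blast
qed

lemma extend_perm:
  "length (xs::nat list) = length (ys::nat list) \<Longrightarrow> (\<forall>i<length xs. \<forall>j<length xs. xs!i = xs!j \<longleftrightarrow> ys!i = ys!j)
   \<Longrightarrow> \<exists>h. bij h \<and> map h xs = ys"
proof (induction xs arbitrary: ys)
  case Nil then have "ys = []" by simp
  then have "bij (id::nat\<Rightarrow>nat) \<and> map id [] = ys" by simp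
  then show ?case by blast
next
  case (Cons x xs)
  then obtain y ys' where ys: "ys = y # ys'" by (cases ys) auto
  have c: "\<forall>i<length xs. \<forall>j<length xs. xs!i = xs!j \<longleftrightarrow> ys'!i = ys'!j"
  proof (intro allI impI)
    fix i j assume "i < length xs" "j < length xs"
    then show "xs!i = xs!j \<longleftrightarrow> ys'!i = ys'!j" using Cons.prems(2) ys
      by (metis Suc_less_eq length_Cons nth_Cons_Suc)
  qed
  obtain h where h: "bij h" "map h xs = ys'" using Cons.IH[of ys'] Cons.prems ys c by auto
  have c0: "x = xs!j \<longleftrightarrow> y = ys'!j" if "j < length xs" for j
    using Cons.prems(2) ys that
    by (metis Suc_less_eq length_Cons nth_Cons_0 nth_Cons_Suc zero_less_Suc)
  show ?case
  proof (cases "x \<in> set xs")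
    case True
    then obtain j where j: "j < length xs" "xs!j = x" by (metis in_set_conv_nth)
    then have "y = ys'!j" using c0 by blast
    moreover have "ys'!j = h x" using h j by auto
    ultimately show ?thesis using h ys by (intro exI[of _ h]) auto
  next
    case False
    have yn: "y \<notin> set ys'"
    proof
      assume "y \<in> set ys'"
      then obtain j where "j < length ys'" "ys'!j = y" by (metis in_set_conv_nth)
      then have "x = xs!j" using c0 h(2) by (metis length_map)
      then show False using False \<open>j < length ys'\<close> h(2) by (metis length_map nth_mem)
    qed
    define h' where "h' = sw y (h x) \<circ> h"
    have "bij h'" unfolding h'_def using bij_sw h(1) bij_comp by blast
    moreover have "h' x = y" unfolding h'_def sw_def by auto
    moreover have "map h' xs = ys'"
    proof -
      have "h' z = h z" if z: "z \<in> set xs" for z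
      proof -
        have "h z \<in> set ys'" using z h(2) by auto
        then have "h z \<noteq> y" using yn by blast
        moreover have "h z \<noteq> h x" using z False h(1) bij_is_inj by (metis injD)
        ultimately show ?thesis unfolding h'_def sw_def by auto
      qed
      then show ?thesis using h(2) by (metis map_eq_conv)
    qed
    ultimately show ?thesis using ys by (intro exI[of _ h']) auto
  qed
qed

lemma map_tuples: "A \<subseteq> tuples k \<Longrightarrow> map h ` A \<subseteq> tuples k"
  unfolding tuples_def by auto

lemma aut_crit:
  assumes Dfin: "finite D" and Ddet: "detQ k Q D" and Dess: "\<forall>t\<in>D. ess k Q t"
    and hb: "bij h" and cond: "\<forall>B \<subseteq> D. (map h ` B \<in> Q \<longleftrightarrow> B \<in> Q)"
  shows "h \<in> Aut k Q"
proof -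
  have Dt: "D \<subseteq> tuples k" using Dess unfolding ess_def by blast
  have injm: "inj (map h)" using hb bij_is_inj inj_mapI by blast
  have into: "map h ` D \<subseteq> D"
  proof
    fix u assume "u \<in> map h ` D"
    then obtain t where t: "t \<in> D" "u = map h t" by blast
    show "u \<in> D"
    proof (rule ccontr)
      assume un: "u \<notin> D"
      obtain A where A: "A \<subseteq> tuples k" "(insert t A \<in> Q) \<noteq> (A - {t} \<in> Q)"
        using Dess t unfolding ess_def by blast
      define A1 where "A1 = insert t A \<inter> D"
      define A2 where "A2 = (A - {t}) \<inter> D"
      have "insert t A \<subseteq> tuples k" using A t Dt by blast
      note it = this
      have s1: "A1 \<subseteq> D" "A2 \<subseteq> D" unfolding A1_def A2_def by auto
      have r1: "A1 \<inter> D = insert t A \<inter> D" unfolding A1_def by auto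
      have r2: "A2 \<inter> D = (A - {t}) \<inter> D" unfolding A2_def by auto
      have e1: "A1 \<in> Q \<longleftrightarrow> insert t A \<in> Q" using detQD[OF Ddet subset_trans[OF s1(1) Dt] it r1] .
      have e2: "A2 \<in> Q \<longleftrightarrow> A - {t} \<in> Q" using detQD[OF Ddet subset_trans[OF s1(2) Dt] _ r2] A(1) by blast
      have "A1 = insert t A2" unfolding A1_def A2_def using t by blast
      then have "map h ` A1 = insert u (map h ` A2)" using t by simp
      then have q3: "map h ` A1 \<inter> D = map h ` A2 \<inter> D" using un by (simp add: Int_insert_left)
      have q1: "map h ` A1 \<subseteq> tuples k" using map_tuples[OF subset_trans[OF s1(1) Dt]] .
      have q2: "map h ` A2 \<subseteq> tuples k" using map_tuples[OF subset_trans[OF s1(2) Dt]] .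
      have "map h ` A1 \<in> Q \<longleftrightarrow> map h ` A2 \<in> Q" using detQD[OF Ddet q1 q2 q3] .
      moreover have "map h ` A1 \<in> Q \<longleftrightarrow> A1 \<in> Q" using cond[rule_format, OF s1(1)] .
      moreover have "map h ` A2 \<in> Q \<longleftrightarrow> A2 \<in> Q" using cond[rule_format, OF s1(2)] .
      ultimately show False using e1 e2 A(2) by simp
    qed
  qed
  have onto: "map h ` D = D" using endo_inj_surj[OF Dfin into inj_on_subset[OF injm subset_UNIV]] .
  have "A \<in> Q \<longleftrightarrow> map h ` A \<in> Q" if A: "A \<subseteq> tuples k" for A
  proof -
    have "map h ` A \<inter> D = map h ` (A \<inter> D)"
    proof
      show "map h ` A \<inter> D \<subseteq> map h ` (A \<inter> D)"
      proof
        fix x assume x: "x \<in> map h ` A \<inter> D"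
        then obtain a where "a \<in> A" "x = map h a" by blast
        have "x \<in> map h ` D" using x onto by simp
        then obtain d where "d \<in> D" "x = map h d" by blast
        then have "a = d" using injm \<open>x = map h a\<close> by (metis injD)
        then show "x \<in> map h ` (A \<inter> D)" using \<open>a \<in> A\<close> \<open>d \<in> D\<close> \<open>x = map h a\<close> by blast
      qed
      show "map h ` (A \<inter> D) \<subseteq> map h ` A \<inter> D" using image_Int_subset[of "map h" A D] onto by simp
    qed
    have "map h ` A \<in> Q \<longleftrightarrow> map h ` A \<inter> D \<in> Q"
      using detQD[OF Ddet map_tuples[OF A], of "map h ` A \<inter> D"] map_tuples[OF A] by (simp add: Int_assoc le_infI1)
    also have "\<dots> \<longleftrightarrow> map h ` (A \<inter> D) \<in> Q" using \<open>map h ` A \<inter> D = map h ` (A \<inter> D)\<close> by simp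
    also have "\<dots> \<longleftrightarrow> A \<inter> D \<in> Q" using cond[rule_format, of "A \<inter> D"] by simp
    also have "\<dots> \<longleftrightarrow> A \<in> Q" using detQD[OF Ddet A, of "A \<inter> D"] A by (simp add: Int_assoc le_infI1)
    finally show ?thesis by simp
  qed
  then show ?thesis unfolding Aut_def using hb by blast
qed




definition TT :: form where "TT = Ex 0 (Eq 0 0)"

fun conjL :: "form list \<Rightarrow> form" where
  "conjL [] = TT"
| "conjL (p # ps) = Conj p (conjL ps)"

definition disjL :: "form list \<Rightarrow> form" where
  "disjL ps = Neg (conjL (map Neg ps))"

fun exL :: "nat list \<Rightarrow> form \<Rightarrow> form" where
  "exL [] p = p"
| "exL (v # vs) p = Ex v (exL vs p)"

lemma sat_conjL: "sat k Q \<sigma> (conjL ps) \<longleftrightarrow> (\<forall>p\<in>set ps. sat k Q \<sigma> p)"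
  by (induction ps) (auto simp: TT_def)

lemma fv_conjL: "fv (conjL ps) \<subseteq> \<Union> (fv ` set ps)"
  by (induction ps) (auto simp: TT_def)

lemma sat_disjL: "sat k Q \<sigma> (disjL ps) \<longleftrightarrow> (\<exists>p\<in>set ps. sat k Q \<sigma> p)"
  by (simp add: disjL_def sat_conjL)

lemma fv_disjL: "fv (disjL ps) \<subseteq> \<Union> (fv ` set ps)"
  using fv_conjL[of "map Neg ps"] by (simp add: disjL_def)

lemma sat_exL: "sat k Q \<sigma> (exL vs p) \<longleftrightarrow> (\<exists>f. (\<forall>v. v \<notin> set vs \<longrightarrow> f v = \<sigma> v) \<and> sat k Q f p)"
proof (induction vs arbitrary: \<sigma>)
  case Nil
  then show ?case by (auto intro: exI[of _ \<sigma>] simp: fun_eq_iff)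
next
  case (Cons v vs)
  show ?case
  proof
    assume "sat k Q \<sigma> (exL (v # vs) p)"
    then obtain c where "sat k Q (\<sigma>(v := c)) (exL vs p)" by auto
    then obtain f where f: "\<forall>w. w \<notin> set vs \<longrightarrow> f w = (\<sigma>(v := c)) w" "sat k Q f p" using Cons.IH by blast
    then show "\<exists>f. (\<forall>w. w \<notin> set (v # vs) \<longrightarrow> f w = \<sigma> w) \<and> sat k Q f p" by (intro exI[of _ f]) auto
  next
    assume "\<exists>f. (\<forall>w. w \<notin> set (v # vs) \<longrightarrow> f w = \<sigma> w) \<and> sat k Q f p"
    then obtain f where f: "\<forall>w. w \<notin> set (v # vs) \<longrightarrow> f w = \<sigma> w" "sat k Q f p" by blast
    have "\<forall>w. w \<notin> set vs \<longrightarrow> f w = (\<sigma>(v := f v)) w" using f(1) by auto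
    then have "sat k Q (\<sigma>(v := f v)) (exL vs p)" using Cons.IH f(2) by blast
    then show "sat k Q \<sigma> (exL (v # vs) p)" by auto
  qed
qed

lemma fv_exL: "fv (exL vs p) = fv p - set vs"
  by (induction vs) auto

lemma upd_range: "upd_list \<sigma> [b..<b+k] as v = (if b \<le> v \<and> v < b+k then as!(v-b) else \<sigma> v)"
proof (cases "b \<le> v \<and> v < b+k")
  case True
  have "(LEAST i. i < k \<and> [b..<b+k] ! i = v) = v - b"
    by (rule Least_equality) (use True in auto)
  then show ?thesis using True unfolding upd_list_def by simp
next
  case False
  then show ?thesis unfolding upd_list_def by auto
qed

lemma sat_psi:
  assumes l: "set l \<subseteq> tuples k" and w: "\<forall>t\<in>set l. \<forall>j<k. w t j < b"
  shows "sat k Q \<sigma> (QF [b..<b+k] (disjL (map (\<lambda>t. conjL (map (\<lambda>j. Eq (b+j) (w t j)) [0..<k])) l)))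
     \<longleftrightarrow> (\<lambda>t. map (\<lambda>j. \<sigma> (w t j)) [0..<k]) ` set l \<in> Q"
proof -
  have "{as \<in> tuples k. sat k Q (upd_list \<sigma> [b..<b+k] as) (disjL (map (\<lambda>t. conjL (map (\<lambda>j. Eq (b+j) (w t j)) [0..<k])) l))}
     = (\<lambda>t. map (\<lambda>j. \<sigma> (w t j)) [0..<k]) ` set l" (is "?L = ?R")
  proof
    show "?L \<subseteq> ?R"
    proof
      fix as assume "as \<in> ?L"
      then have len: "length as = k" and
        "\<exists>t\<in>set l. \<forall>j<k. upd_list \<sigma> [b..<b+k] as (b+j) = upd_list \<sigma> [b..<b+k] as (w t j)"
        by (auto simp: tuples_def sat_disjL sat_conjL)
      then obtain t where t: "t \<in> set l" "\<forall>j<k. upd_list \<sigma> [b..<b+k] as (b+j) = upd_list \<sigma> [b..<b+k] as (w t j)"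
        by blast
      have "\<forall>j<k. as!j = \<sigma> (w t j)"
      proof (intro allI impI)
        fix j assume j: "j < k"
        have "w t j < b" using w t(1) j by blast
        then show "as!j = \<sigma> (w t j)" using t(2) j by (simp add: upd_range)
      qed
      then have "as = map (\<lambda>j. \<sigma> (w t j)) [0..<k]" using len by (intro nth_equalityI) auto
      then show "as \<in> ?R" using t(1) by blast
    qed
    show "?R \<subseteq> ?L"
    proof
      fix as assume "as \<in> ?R"
      then obtain t where t: "t \<in> set l" "as = map (\<lambda>j. \<sigma> (w t j)) [0..<k]" by blast
      have "\<forall>j<k. upd_list \<sigma> [b..<b+k] as (b+j) = upd_list \<sigma> [b..<b+k] as (w t j)"
      proof (intro allI impI)
        fix j assume j: "j < k"
        have "w t j < b" using w t(1) j by blast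
        then show "upd_list \<sigma> [b..<b+k] as (b+j) = upd_list \<sigma> [b..<b+k] as (w t j)"
          using t(2) j by (simp add: upd_range)
      qed
      then show "as \<in> ?L" using t by (auto simp: tuples_def sat_disjL sat_conjL)
    qed
  qed
  then show ?thesis by simp
qed




definition lst :: "'a set \<Rightarrow> 'a list" where "lst B = (SOME l. set l = B)"

lemma set_lst: "finite B \<Longrightarrow> set (lst B) = B"
proof -
  assume "finite B"
  then have "\<exists>l. set l = B" by (rule finite_list)
  then show "set (lst B) = B" unfolding lst_def by (rule someI_ex)
qed

theorem proposition18:
  fixes k :: nat and Q :: "nat list set set" and a :: "nat list"
  assumes "is_quantifier k Q" and "clopen_quantifier k Q"
  shows "definable k Q (length a) (orbit k Q a)"
proof -
  obtain F where F: "finite F" "detQ k Q F"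
    using finite_support[OF assms] unfolding detQ_def by blast
  define D where "D = {t. ess k Q t}"
  have Dfin: "finite D" and Ddet: "detQ k Q D" using ess_det[OF F] unfolding D_def by auto
  have Dess: "\<forall>t\<in>D. ess k Q t" unfolding D_def by simp
  have Dt: "D \<subseteq> tuples k" using Dess unfolding ess_def by blast
  define S where "S = \<Union> (set ` D)"
  have Sfin: "finite S" unfolding S_def using Dfin by simp
  define s where "s = sorted_list_of_set S"
  have sS: "set s = S" and sd: "distinct s" unfolding s_def using Sfin by auto
  define m where "m = length s"
  define n where "n = length a"
  define c where "c = a @ s"
  have lc: "length c = n + m" unfolding c_def n_def m_def by simp
  define ix where "ix e = (LEAST i. i < m \<and> s!i = e)" for e
  have ix: "ix e < m \<and> s!(ix e) = e" if "e \<in> S" for e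
  proof -
    have "e \<in> set s" using that sS by simp
    then obtain i where i: "i < length s" "s!i = e" by (auto simp: in_set_conv_nth)
    have "i < m \<and> s!i = e" using i unfolding m_def by simp
    then have "(LEAST i. i < m \<and> s!i = e) < m \<and> s!(LEAST i. i < m \<and> s!i = e) = e"
      by (rule LeastI[where P="\<lambda>i. i < m \<and> s!i = e"])
    then show ?thesis unfolding ix_def .
  qed
  define var where "var e = n + ix e" for e
  define atom where "atom t = conjL (map (\<lambda>j. Eq (n+m+j) (var (t!j))) [0..<k])" for t
  define psi where "psi B = QF [n+m..<n+m+k] (disjL (map atom (lst B)))" for B
  define cl where "cl B = (if B \<in> Q then psi B else Neg (psi B))" for B
  define Cond where "Cond = conjL (map cl (lst (Pow D)))"
  define eqf where "eqf u v = (if c!u = c!v then Eq u v else Neg (Eq u v))" for u v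
  define EqT where "EqT = conjL (concat (map (\<lambda>u. map (eqf u) [0..<n+m]) [0..<n+m]))"
  define \<phi> where "\<phi> = exL [n..<n+m] (Conj EqT Cond)"

  have tS: "set t \<subseteq> S" if "t \<in> D" for t using that unfolding S_def by blast
  have tk: "length t = k" if "t \<in> D" for t using that Dt unfolding tuples_def by blast

  have satEqT: "sat k Q f EqT \<longleftrightarrow> (\<forall>u<n+m. \<forall>v<n+m. (f u = f v \<longleftrightarrow> c!u = c!v))" for f
  proof -
    have "sat k Q f EqT \<longleftrightarrow> (\<forall>u\<in>{0..<n+m}. \<forall>v\<in>{0..<n+m}. sat k Q f (eqf u v))"
      unfolding EqT_def sat_conjL by auto
    moreover have "sat k Q f (eqf u v) \<longleftrightarrow> (f u = f v \<longleftrightarrow> c!u = c!v)" for u v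
      by (simp add: eqf_def)
    ultimately show ?thesis by auto
  qed
  have satpsi: "sat k Q f (psi B) \<longleftrightarrow> map (\<lambda>e. f (var e)) ` B \<in> Q" if B: "B \<subseteq> D" for f B
  proof -
    have fB: "finite B" using B Dfin finite_subset by blast
    have l1: "set (lst B) \<subseteq> tuples k" using set_lst[OF fB] B Dt by blast
    have l2: "\<forall>t\<in>set (lst B). \<forall>j<k. var (t!j) < n+m"
    proof (intro ballI allI impI)
      fix t j assume t: "t \<in> set (lst B)" and j: "j < k"
      then have "t \<in> D" using set_lst[OF fB] B by blast
      then have "t!j \<in> S" using tS tk j by (metis nth_mem subsetD)
      then show "var (t!j) < n+m" using ix unfolding var_def by simp
    qed
    have "sat k Q f (psi B) \<longleftrightarrow> (\<lambda>t. map (\<lambda>j. f (var (t!j))) [0..<k]) ` set (lst B) \<in> Q"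
      unfolding psi_def atom_def using sat_psi[OF l1, of "\<lambda>t j. var (t!j)" "n+m" Q f] l2 by simp
    moreover have "(\<lambda>t. map (\<lambda>j. f (var (t!j))) [0..<k]) ` set (lst B) = map (\<lambda>e. f (var e)) ` B"
    proof -
      have "map (\<lambda>j. f (var (t!j))) [0..<k] = map (\<lambda>e. f (var e)) t" if "t \<in> B" for t
        using tk[of t] that B by (intro nth_equalityI) auto
      then show ?thesis using set_lst[OF fB] by (auto simp: image_iff)
    qed
    ultimately show ?thesis by simp
  qed
  have satCond: "sat k Q f Cond \<longleftrightarrow> (\<forall>B\<subseteq>D. (map (\<lambda>e. f (var e)) ` B \<in> Q \<longleftrightarrow> B \<in> Q))" for f
  proof -
    have "sat k Q f Cond \<longleftrightarrow> (\<forall>B\<in>Pow D. sat k Q f (cl B))"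
      unfolding Cond_def using set_lst[of "Pow D"] Dfin by (simp add: sat_conjL)
    also have "\<dots> \<longleftrightarrow> (\<forall>B\<subseteq>D. (map (\<lambda>e. f (var e)) ` B \<in> Q \<longleftrightarrow> B \<in> Q))"
      unfolding cl_def using satpsi by auto
    finally show ?thesis .
  qed

  have fvphi: "fv \<phi> \<subseteq> {..<n}"
  proof -
    have fE: "fv EqT \<subseteq> {..<n+m}"
      using fv_conjL[of "concat (map (\<lambda>u. map (eqf u) [0..<n+m]) [0..<n+m])"]
      unfolding EqT_def eqf_def by (auto split: if_splits)
    have fpsi: "fv (psi B) \<subseteq> {..<n+m}" if B: "B \<subseteq> D" for B
    proof -
      have fB: "finite B" using B Dfin finite_subset by blast
      have fat: "fv (atom t) \<subseteq> {n+m..<n+m+k} \<union> {..<n+m}" if t: "t \<in> set (lst B)" for t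
      proof -
        have tD: "t \<in> D" using t set_lst[OF fB] B by blast
        have "var (t!j) < n+m" if "j < k" for j
        proof -
          have "t!j \<in> S" using tS[OF tD] tk[OF tD] that by (metis nth_mem subsetD)
          then show ?thesis using ix unfolding var_def by simp
        qed
        then show ?thesis using fv_conjL[of "map (\<lambda>j. Eq (n+m+j) (var (t!j))) [0..<k]"]
          unfolding atom_def by auto
      qed
      then have "fv (disjL (map atom (lst B))) \<subseteq> {n+m..<n+m+k} \<union> {..<n+m}"
      proof -
        have "fv (disjL (map atom (lst B))) \<subseteq> \<Union> (fv ` set (map atom (lst B)))" by (rule fv_disjL)
        also have "\<dots> \<subseteq> {n+m..<n+m+k} \<union> {..<n+m}" using fat by (simp add: UN_least)
        finally show ?thesis .
      qed
      then show ?thesis unfolding psi_def by auto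
    qed
    have fcl: "fv (cl B) \<subseteq> {..<n+m}" if "B \<in> Pow D" for B
      using that fpsi unfolding cl_def by auto
    have "fv Cond \<subseteq> \<Union> (fv ` set (map cl (lst (Pow D))))" unfolding Cond_def by (rule fv_conjL)
    also have "\<dots> \<subseteq> {..<n+m}" using fcl set_lst[of "Pow D"] Dfin by (auto simp: UN_subset_iff)
    finally have "fv Cond \<subseteq> {..<n+m}" .
    then show ?thesis using fE unfolding \<phi>_def fv_exL by auto
  qed

  have orbit_sub: "orbit k Q a \<subseteq> tuples n" unfolding orbit_def tuples_def n_def by auto

  have main: "b \<in> orbit k Q a \<longleftrightarrow> sat k Q (\<lambda>i. if i < n then b ! i else 0) \<phi>" if b: "b \<in> tuples n" for b
  proof
    assume "b \<in> orbit k Q a"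
    then obtain h where h: "h \<in> Aut k Q" "b = map h a" unfolding orbit_def by blast
    have hb: "bij h" using h(1) unfolding Aut_def by blast
    define f where "f i = (if i < n then b!i else if i < n+m then h (s!(i-n)) else 0)" for i
    have fc: "f u = h (c!u)" if "u < n+m" for u
      using that h(2) unfolding f_def c_def n_def m_def by (auto simp: nth_append)
    have "sat k Q f EqT" unfolding satEqT using fc hb bij_is_inj by (metis injD)
    moreover have "sat k Q f Cond" unfolding satCond
    proof (intro allI impI)
      fix B assume B: "B \<subseteq> D"
      have "f (var e) = h e" if "e \<in> S" for e
        using ix[OF that] unfolding f_def var_def by simp
      then have "map (\<lambda>e. f (var e)) t = map h t" if "t \<in> B" for t
        using tS that B by (metis (no_types, lifting) map_eq_conv subsetD)
      then have "map (\<lambda>e. f (var e)) ` B = map h ` B" by (rule image_cong[OF refl])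
      moreover have "B \<subseteq> tuples k" using B Dt by blast
      ultimately show "map (\<lambda>e. f (var e)) ` B \<in> Q \<longleftrightarrow> B \<in> Q" using h(1) unfolding Aut_def by auto
    qed
    moreover have "\<forall>v. v \<notin> set [n..<n+m] \<longrightarrow> f v = (if v < n then b ! v else 0)"
      unfolding f_def by auto
    ultimately have "(\<forall>v. v \<notin> set [n..<n+m] \<longrightarrow> f v = (if v < n then b ! v else 0)) \<and> sat k Q f (Conj EqT Cond)"
      by simp
    then show "sat k Q (\<lambda>i. if i < n then b ! i else 0) \<phi>"
      unfolding \<phi>_def sat_exL by (rule exI[of _ f])
  next
    assume "sat k Q (\<lambda>i. if i < n then b ! i else 0) \<phi>"
    then obtain f where f: "\<forall>v. v \<notin> set [n..<n+m] \<longrightarrow> f v = (if v < n then b ! v else 0)"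
      "sat k Q f EqT" "sat k Q f Cond" unfolding \<phi>_def sat_exL by auto
    define d where "d = map f [0..<n+m]"
    have "\<exists>h. bij h \<and> map h c = d"
      using f(2) unfolding satEqT d_def by (intro extend_perm) (auto simp: lc)
    then obtain h where hb: "bij h" and hc: "map h c = d" by blast
    have hcu: "h (c!u) = f u" if "u < n+m" for u
      using hc that lc unfolding d_def by (metis length_map nth_map nth_upt add_0)
    have "map h a = b"
    proof (rule nth_equalityI)
      show "length (map h a) = length b" using b unfolding tuples_def n_def by simp
      fix j assume "j < length (map h a)"
      then have j: "j < n" unfolding n_def by simp
      then have "h (a!j) = f j" using hcu[of j] unfolding c_def by (simp add: nth_append n_def)
      also have "\<dots> = b!j" using f(1) j by simp
      finally show "map h a ! j = b ! j" using j unfolding n_def by simp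
    qed
    moreover have "h \<in> Aut k Q"
    proof (rule aut_crit[OF Dfin Ddet Dess hb], intro allI impI)
      fix B assume B: "B \<subseteq> D"
      have "f (var e) = h e" if "e \<in> S" for e
      proof -
        have "c!(n + ix e) = e" using ix[OF that] unfolding c_def n_def by (simp add: nth_append)
        then show ?thesis using hcu[of "n + ix e"] ix[OF that] unfolding var_def by simp
      qed
      then have "map (\<lambda>e. f (var e)) t = map h t" if "t \<in> B" for t
        using tS that B by (metis (no_types, lifting) map_eq_conv subsetD)
      then have "map (\<lambda>e. f (var e)) ` B = map h ` B" by (rule image_cong[OF refl])
      then show "map h ` B \<in> Q \<longleftrightarrow> B \<in> Q" using f(3) B unfolding satCond by auto
    qed
    ultimately show "b \<in> orbit k Q a" unfolding orbit_def by blast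
  qed
  show ?thesis unfolding definable_def n_def[symmetric]
    using orbit_sub fvphi main by blast
qed


end
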